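(* For all $\lambda\in\mathbf{k}$ and $v\in\mathcal{V}^{\mathrm{B}}$, one has in $\mathcal{V}^{\mathrm{B}}\otimes\mathcal{V}^{\mathrm{B}}$: \[\Delta^{\mathcal{W},\mathrm{B}}\big(\lambda+v(X_1-1)\big)=\lambda\,(1\otimes1)+\mathsf{r}\underline{\mathrm{row}}\cdot\mathsf{r}\underline{\rho}(v)\cdot\mathsf{r}\underline{\mathrm{col}},\] i.e. $\Delta^{\mathcal{W},\mathrm{B}}$ followed by the inclusion $\mathcal{W}^{\mathrm{B}}\otimes\mathcal{W}^{\mathrm{B}}\hookrightarrow\mathcal{V}^{\mathrm{B}}\otimes\mathcal{V}^{\mathrm{B}}$ equals $\Delta_{\mathcal{O}^{\mathrm{B}}_{\mathsf{mat}}}$ composed with the isomorphism $\mathcal{W}^{\mathrm{B}}\cong\mathbf{k}\oplus(\mathcal{V}^{\mathrm{B}},\cdot_{X_1-1})$.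
   Context: $\mathbf{k}$ is a commutative $\mathbb{Q}$-algebra; $F_2$ free on $X_0,X_1$, $\mathcal{V}^{\mathrm{B}}=\mathbf{k}F_2$; in $\mathcal{V}^{\mathrm{B}}\otimes\mathcal{V}^{\mathrm{B}}$, $X_i=X_i\otimes1$, $Y_i=1\otimes X_i$. $\mathrm{op}_G$ is the antiautomorphism $g\mapsto g^{-1}$ of $\mathbf{k}G$. $\underline{\rho}:\mathcal{V}^{\mathrm{B}}\to M_3(\mathcal{V}^{\mathrm{B}}\otimes\mathcal{V}^{\mathrm{B}})$ is the algebra morphism with $\underline{\rho}(X_0)=\begin{pmatrix}X_0&0&0\\0&(1-X_1)X_0+Y_1^{-1}Y_0Y_1&(1-X_1)X_0X_1\\0&X_0-Y_1^{-1}Y_0Y_1X_1^{-1}&X_0X_1\end{pmatrix}$, $\underline{\rho}(X_1)=\begin{pmatrix}(X_1-1)Y_1+1&Y_1(1-Y_1)&0\\1-X_1&Y_1&0\\0&0&1\end{pmatrix}$; with $D=\mathrm{diag}(Y_1,X_1,(X_0X_1)^{-1}Y_1^{-1}Y_0Y_1)$, $\mathsf{r}\underline{\rho}(v):=D^{-1}M_3(\mathrm{op}_{F_2^2})({}^t\underline{\rho}(\mathrm{op}_{F_2}(v)))D$ (entrywise $\mathrm{op}$, transpose). $\mathsf{r}\underline{\mathrm{row}}=(Y_1,\,-X_1Y_1,\,0)\in M_{1,3}$, $\mathsf{r}\underline{\mathrm{col}}=Y_1^{-1}\,{}^t(X_1-1,\,1-Y_1,\,0)\in M_{3,1}$. For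 an algebra $B$ and $e\in B$, $\mathbf{k}\oplus(B,\cdot_e)$ is the algebra with product $(\lambda,b)(\lambda',b')=(\lambda\lambda',\lambda b'+\lambda'b+beb')$; $\Delta_{\mathcal{O}^{\mathrm{B}}_{\mathsf{mat}}}:\mathbf{k}\oplus(\mathcal{V}^{\mathrm{B}},\cdot_{X_1-1})\to\mathcal{V}^{\mathrm{B}}\otimes\mathcal{V}^{\mathrm{B}}$ is $(\lambda,v)\mapsto\lambda+\mathsf{r}\underline{\mathrm{row}}\,\mathsf{r}\underline{\rho}(v)\,\mathsf{r}\underline{\mathrm{col}}$. $\mathcal{W}^{\mathrm{B}}=\mathbf{k}\oplus\mathcal{V}^{\mathrm{B}}(X_1-1)$ is a subalgebra, isomorphic to $\mathbf{k}\oplus(\mathcal{V}^{\mathrm{B}},\cdot_{X_1-1})$ via $(\lambda,v)\mapsto\lambda+v(X_1-1)$; it is generated by $X_1^{-1}$ and $X_0^n(X_1-1)$, $n\in\mathbb{Z}$. $\Delta^{\mathcal{W},\mathrm{B}}:\mathcal{W}^{\mathrm{B}}\to\mathcal{W}^{\mathrm{B}}\otimes\mathcal{W}^{\mathrm{B}}$ is the (known to exist) algebra morphism with $\Delta^{\mathcal{W},\mathrm{B}}(X_1^{-1})=X_1^{-1}\otimes X_1^{-1}$ and $\Delta^{\mathcal{W},\mathrm{B}}(X_0^n(X_1-1))=X_0^n(X_1-1)\otimes1+1\otimes X_0^n(X_1-1)-\sum_{k=1}^{n-1}X_0^k(X_1-1)\otimes X_0^{n-k}(X_1-1)$ for $n\in\mathbb{Z}$,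 with the convention $\sum_{k=p}^qf(k)=f(p)+\dots+f(q)$ if $q>p-1$, $0$ if $q=p-1$, $-f(p-1)-\dots-f(q+1)$ if $q<p-1$. *)

theory Defs
  imports "HOL-Analysis.Analysis" "HOL-Library.Poly_Mapping" "HOL-Library.Product_Plus"
begin

text \<open>A letter (i, s): generator X_i (i = False means X0, i = True means X1),
  s = True means the inverse letter.\<close>
type_synonym letter = "bool \<times> bool"

definition linv :: "letter \<Rightarrow> letter" where
  "linv x = (fst x, \<not> snd x)"

inductive cancel1 :: "letter list \<Rightarrow> letter list \<Rightarrow> bool" where
  "cancel1 (a @ x # linv x # b) (a @ b)"

quotient_type F2 = "letter list" / "equivclp cancel1"
  by (rule equivp_evquivclp)

lemma equivclp_map_mono:
  assumes "\<And>x y. r x y \<Longrightarrow> r (f x) (f y)" and "equivclp r a b"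
  shows "equivclp r (f a) (f b)"
  using assms(2)
proof (induction rule: equivclp_induct)
  case base then show ?case by simp
next
  case (step y z)
  from step.hyps(2) have "r (f y) (f z) \<or> r (f z) (f y)" using assms(1) by blast
  with step.IH show ?case by (rule equivclp_into_equivclp)
qed

lemma cancel1_append_left: "cancel1 x y \<Longrightarrow> cancel1 (c @ x) (c @ y)"
proof (induction rule: cancel1.induct)
  case (1 a x b)
  show ?case using cancel1.intros[of "c @ a" x b] by simp
qed

lemma cancel1_append_right: "cancel1 x y \<Longrightarrow> cancel1 (x @ c) (y @ c)"
proof (induction rule: cancel1.induct)
  case (1 a x b)
  show ?case using cancel1.intros[of a x "b @ c"] by simp
qed

lemma equivclp_append:
  assumes "equivclp cancel1 a a'" "equivclp cancel1 b b'"
  shows "equivclp cancel1 (a @ b) (a' @ b')"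
proof -
  have "equivclp cancel1 (a @ b) (a' @ b)"
    using equivclp_map_mono[of cancel1 "\<lambda>x. x @ b", OF cancel1_append_right assms(1)] .
  moreover have "equivclp cancel1 (a' @ b) (a' @ b')"
    using equivclp_map_mono[of cancel1 "\<lambda>x. a' @ x", OF cancel1_append_left assms(2)] .
  ultimately show ?thesis by (rule equivclp_trans)
qed

definition winv :: "letter list \<Rightarrow> letter list" where
  "winv w = rev (map linv w)"

lemma linv_linv [simp]: "linv (linv x) = x"
  by (simp add: linv_def)

lemma cancel1_winv: "cancel1 x y \<Longrightarrow> cancel1 (winv x) (winv y)"
proof (induction rule: cancel1.induct)
  case (1 a x b)
  have e1: "winv (a @ x # linv x # b) = winv b @ x # linv x # winv a"
    by (simp add: winv_def)
  have e2: "winv (a @ b) = winv b @ winv a"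
    by (simp add: winv_def)
  show ?case unfolding e1 e2 by (rule cancel1.intros)
qed

lemma winv_cancel: "equivclp cancel1 (winv w @ w) []"
proof (induction w)
  case Nil then show ?case by (simp add: winv_def)
next
  case (Cons x w)
  have "cancel1 (winv w @ linv x # linv (linv x) # w) (winv w @ w)"
    by (rule cancel1.intros)
  then have "cancel1 (winv (x # w) @ x # w) (winv w @ w)"
    by (simp add: winv_def)
  then show ?case using Cons.IH by (meson r_into_equivclp equivclp_trans)
qed

instantiation F2 :: group_add
begin

lift_definition zero_F2 :: F2 is "[]" .

lift_definition plus_F2 :: "F2 \<Rightarrow> F2 \<Rightarrow> F2" is "(@)"
  by (rule equivclp_append)

lift_definition uminus_F2 :: "F2 \<Rightarrow> F2" is winv
  by (rule equivclp_map_mono[of cancel1 winv, OF cancel1_winv])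

definition minus_F2 :: "F2 \<Rightarrow> F2 \<Rightarrow> F2" where
  "minus_F2 a b = a + - b"

instance
proof
  fix a b c :: F2
  show "a + b + c = a + (b + c)" by transfer simp
  show "0 + a = a" by transfer simp
  show "a + 0 = a" by transfer simp
  show "- a + a = 0" by transfer (rule winv_cancel)
  show "a + - b = a - b" by (simp add: minus_F2_def)
qed

end

lift_definition gen :: "bool \<Rightarrow> F2" is "\<lambda>i. [(i, False)]" .

definition zpow :: "'g::group_add \<Rightarrow> int \<Rightarrow> 'g" where
  "zpow g n = (if 0 \<le> n then ((+) g ^^ nat n) 0 else - (((+) g ^^ nat (- n)) 0))"

text \<open>The group algebra k G of a group G (written additively) is the ring
  of finitely supported functions with convolution product.
  V^B = k F2 and V^B \<otimes> V^B = k (F2 \<times> F2).\<close>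
type_synonym 'k VB = "F2 \<Rightarrow>\<^sub>0 'k"
type_synonym 'k VB2 = "(F2 \<times> F2) \<Rightarrow>\<^sub>0 'k"

abbreviation scal :: "'k::zero \<Rightarrow> ('g::zero \<Rightarrow>\<^sub>0 'k)" where
  "scal c \<equiv> Poly_Mapping.single 0 c"

abbreviation grp :: "'g \<Rightarrow> ('g \<Rightarrow>\<^sub>0 'k::{zero,one})" where
  "grp g \<equiv> Poly_Mapping.single g 1"

definition opG :: "('g::group_add \<Rightarrow>\<^sub>0 'k::zero) \<Rightarrow> ('g \<Rightarrow>\<^sub>0 'k)" where
  "opG v = Abs_poly_mapping (\<lambda>g. Poly_Mapping.lookup v (- g))"

definition tens :: "'k::comm_ring_1 VB \<Rightarrow> 'k VB \<Rightarrow> 'k VB2" where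
  "tens a b = (\<Sum>g\<in>Poly_Mapping.keys a. \<Sum>h\<in>Poly_Mapping.keys b. Poly_Mapping.single (g, h) (Poly_Mapping.lookup a g * Poly_Mapping.lookup b h))"

abbreviation X :: "bool \<Rightarrow> 'k::comm_ring_1 VB" where "X i \<equiv> grp (gen i)"
abbreviation Xinv :: "bool \<Rightarrow> 'k::comm_ring_1 VB" where "Xinv i \<equiv> grp (- gen i)"
abbreviation X0pow :: "int \<Rightarrow> 'k::comm_ring_1 VB" where "X0pow n \<equiv> grp (zpow (gen False) n)"

text \<open>Elements of V^B \<otimes> V^B: X_i = X_i \<otimes> 1, Y_i = 1 \<otimes> X_i, and their inverses.\<close>
abbreviation XX :: "bool \<Rightarrow> 'k::comm_ring_1 VB2" where "XX i \<equiv> grp (gen i, 0)"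
abbreviation YY :: "bool \<Rightarrow> 'k::comm_ring_1 VB2" where "YY i \<equiv> grp (0, gen i)"
abbreviation XXi :: "bool \<Rightarrow> 'k::comm_ring_1 VB2" where "XXi i \<equiv> grp (- gen i, 0)"
abbreviation YYi :: "bool \<Rightarrow> 'k::comm_ring_1 VB2" where "YYi i \<equiv> grp (0, - gen i)"

type_synonym 'k M3 = "'k VB2 ^ 3 ^ 3"

definition mat3 :: "'a::zero list \<Rightarrow> 'a list \<Rightarrow> 'a list \<Rightarrow> 'a ^ 3 ^ 3" where
  "mat3 r1 r2 r3 = vector [vector r1, vector r2, vector r3]"

definition rhoX0 :: "'k::comm_ring_1 M3" where
  "rhoX0 = mat3
     [XX False, 0, 0]
     [0, (1 - XX True) * XX False + YYi True * YY False * YY True, (1 - XX True) * XX False * XX True]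
     [0, XX False - YYi True * YY False * YY True * XXi True, XX False * XX True]"

definition rhoX1 :: "'k::comm_ring_1 M3" where
  "rhoX1 = mat3
     [(XX True - 1) * YY True + 1, YY True * (1 - YY True), 0]
     [1 - XX True, YY True, 0]
     [0, 0, 1]"

definition rho_gen :: "bool \<Rightarrow> 'k::comm_ring_1 M3" where
  "rho_gen i = (if i then rhoX1 else rhoX0)"

definition rho_letter :: "letter \<Rightarrow> 'k::comm_ring_1 M3" where
  "rho_letter x = (if snd x then matrix_inv (rho_gen (fst x)) else rho_gen (fst x))"

definition rho_word :: "letter list \<Rightarrow> 'k::comm_ring_1 M3" where
  "rho_word w = foldr (\<lambda>x M. rho_letter x ** M) w (mat 1)"

definition rho_grp :: "F2 \<Rightarrow> 'k::comm_ring_1 M3" where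
  "rho_grp g = rho_word (rep_F2 g)"

definition mscale :: "'a::times \<Rightarrow> 'a ^ 'n ^ 'm \<Rightarrow> 'a ^ 'n ^ 'm" where
  "mscale c A = (\<chi> i j. c * A $ i $ j)"

definition rho :: "'k::comm_ring_1 VB \<Rightarrow> 'k M3" where
  "rho v = (\<Sum>g\<in>Poly_Mapping.keys v. mscale (scal (Poly_Mapping.lookup v g)) (rho_grp g))"

definition mop :: "('g::group_add \<Rightarrow>\<^sub>0 'k::zero) ^ 'n ^ 'm \<Rightarrow> ('g \<Rightarrow>\<^sub>0 'k) ^ 'n ^ 'm" where
  "mop A = (\<chi> i j. opG (A $ i $ j))"

definition Dmat :: "'k::comm_ring_1 M3" where
  "Dmat = mat3 [YY True, 0, 0] [0, XX True, 0]
                [0, 0, XXi True * XXi False * YYi True * YY False * YY True]"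

definition r_rho :: "'k::comm_ring_1 VB \<Rightarrow> 'k M3" where
  "r_rho v = matrix_inv Dmat ** mop (transpose (rho (opG v))) ** Dmat"

definition r_row :: "'k::comm_ring_1 VB2 ^ 3" where
  "r_row = vector [YY True, - (XX True * YY True), 0]"

definition r_col :: "'k::comm_ring_1 VB2 ^ 3" where
  "r_col = vector [YYi True * (XX True - 1), YYi True * (1 - YY True), 0]"

text \<open>row \<cdot> M \<cdot> col for a row vector, a 3x3 matrix and a column vector
  (noncommutative entries; order of factors respected).\<close>
definition row_mat_col :: "'a::semiring_1 ^ 3 \<Rightarrow> 'a ^ 3 ^ 3 \<Rightarrow> 'a ^ 3 \<Rightarrow> 'a" where
  "row_mat_col r M c = (\<Sum>i\<in>UNIV. \<Sum>j\<in>UNIV. r $ i * M $ i $ j * c $ j)"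

definition Delta_Omat :: "'k::comm_ring_1 \<Rightarrow> 'k VB \<Rightarrow> 'k VB2" where
  "Delta_Omat c v = scal c + row_mat_col r_row (r_rho v) r_col"

definition WB :: "'k::comm_ring_1 VB set" where
  "WB = {scal c + v * (X True - 1) | c v. True}"

definition gsum :: "int \<Rightarrow> int \<Rightarrow> (int \<Rightarrow> 'a::ab_group_add) \<Rightarrow> 'a" where
  "gsum p q f = (if p - 1 \<le> q then (\<Sum>k\<in>{p..q}. f k) else - (\<Sum>k\<in>{q+1..p-1}. f k))"

end

theory Submission
  imports Defs
begin

lemma grp_mult: "(grp a :: ('g::monoid_add \<Rightarrow>\<^sub>0 'k::comm_ring_1)) * grp b = grp (a + b)"
  by (simp add: mult_single)

lemma grp_mult2: "(grp a :: ('g::monoid_add \<Rightarrow>\<^sub>0 'k::comm_ring_1)) * (grp b * c) = grp (a + b) * c"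
  by (simp add: mult_single mult.assoc[symmetric])

lemma grp00: "(grp (0,0) :: ('g::monoid_add \<times> 'h::monoid_add \<Rightarrow>\<^sub>0 'k::comm_ring_1)) = 1"
  by (simp add: zero_prod_def[symmetric])

lemma f2_diff: "(a::F2) - b = a + - b" by (rule diff_conv_add_uminus)
lemma f2_assoc: "(a::F2) + b + c = a + (b + c)" by (rule add.assoc)
lemma f2_minus_add: "- ((a::F2) + b) = - b + - a" by (rule minus_add)
lemma f2_c1: "(a::F2) + (- a + b) = b" by (rule add_minus_cancel)
lemma f2_c2: "- (a::F2) + (a + b) = b" by (rule minus_add_cancel)
lemma f2_c3: "(a::F2) + - a = 0" by (rule right_minus)
lemma f2_c4: "- (a::F2) + a = 0" by (rule left_minus)
lemma f2_mm: "- (- (a::F2)) = a" by (rule minus_minus)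

lemmas eng = algebra_simps grp_mult grp_mult2 grp00 f2_diff f2_assoc f2_minus_add f2_c1 f2_c2 f2_c3 f2_c4 f2_mm

lemma pm_expand: "(v::'a \<Rightarrow>\<^sub>0 'b::comm_monoid_add) = (\<Sum>g\<in>Poly_Mapping.keys v. Poly_Mapping.single g (Poly_Mapping.lookup v g))"
proof (rule poly_mapping_eqI)
  fix k
  have "Poly_Mapping.lookup (\<Sum>g\<in>Poly_Mapping.keys v. Poly_Mapping.single g (Poly_Mapping.lookup v g)) k = (\<Sum>g\<in>Poly_Mapping.keys v. (if g = k then Poly_Mapping.lookup v g else 0))"
    by (simp add: lookup_sum lookup_single when_def)
  also have "\<dots> = Poly_Mapping.lookup v k"
    by (simp add: sum.delta' in_keys_iff)
  finally show "Poly_Mapping.lookup v k = Poly_Mapping.lookup (\<Sum>g\<in>Poly_Mapping.keys v. Poly_Mapping.single g (Poly_Mapping.lookup v g)) k" by simp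
qed

lemma scal_grp: "scal c * grp g = (Poly_Mapping.single g c :: 'g::monoid_add \<Rightarrow>\<^sub>0 'k::comm_ring_1)"
  by (simp add: mult_single)

lemma scal_central: "scal c * (x :: 'g::monoid_add \<Rightarrow>\<^sub>0 'k::comm_ring_1) = x * scal c"
proof -
  have "scal c * x = (\<Sum>g\<in>Poly_Mapping.keys x. scal c * Poly_Mapping.single g (Poly_Mapping.lookup x g))"
    by (subst pm_expand[of x]) (simp add: sum_distrib_left)
  also have "\<dots> = (\<Sum>g\<in>Poly_Mapping.keys x. Poly_Mapping.single g (Poly_Mapping.lookup x g) * scal c)"
    by (simp add: mult_single mult.commute)
  also have "\<dots> = x * scal c"
    by (subst (3) pm_expand[of x]) (simp add: sum_distrib_right)
  finally show ?thesis .
qed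

lemma lookup_opG: "Poly_Mapping.lookup (opG v) g = Poly_Mapping.lookup v (- g)"
proof -
  have "{g. Poly_Mapping.lookup v (- g) \<noteq> 0} \<subseteq> uminus ` {x. Poly_Mapping.lookup v x \<noteq> 0}"
    by (auto intro: image_eqI[where x="- _"])
  then have "finite {g. Poly_Mapping.lookup v (- g) \<noteq> 0}"
    using finite_subset finite_imageI finite_lookup by blast
  then show ?thesis by (simp add: opG_def)
qed

lemma opG_add: "opG (a + b) = opG a + opG b"
  by (rule poly_mapping_eqI) (simp add: lookup_opG lookup_add)

lemma opG_zero: "opG 0 = 0"
  by (rule poly_mapping_eqI) (simp add: lookup_opG)

lemma opG_minus: "opG (- a) = - opG (a :: 'g::group_add \<Rightarrow>\<^sub>0 'k::ab_group_add)"
  by (rule poly_mapping_eqI) (simp add: lookup_opG)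

lemma opG_diff: "opG (a - b) = opG a - opG (b :: 'g::group_add \<Rightarrow>\<^sub>0 'k::ab_group_add)"
  by (rule poly_mapping_eqI) (simp add: lookup_opG lookup_minus)

lemma opG_single: "opG (Poly_Mapping.single g c) = Poly_Mapping.single (- g) c"
proof (rule poly_mapping_eqI)
  fix k
  have "(g = - k) = (- g = k)" by auto
  then show "Poly_Mapping.lookup (opG (Poly_Mapping.single g c)) k = Poly_Mapping.lookup (Poly_Mapping.single (- g) c) k"
    by (simp add: lookup_opG lookup_single)
qed

lemma opG_sum: "opG (sum f A) = (\<Sum>x\<in>A. opG (f x))"
  by (induction A rule: infinite_finite_induct) (simp_all add: opG_zero opG_add)

lemma opG_one: "opG (1 :: 'g::group_add \<Rightarrow>\<^sub>0 'k::comm_ring_1) = 1"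
  by (simp add: opG_single flip: single_one)

lemma mult_expand: "(a::'g::monoid_add \<Rightarrow>\<^sub>0 'k::comm_ring_1) * b =
   (\<Sum>g\<in>Poly_Mapping.keys a. \<Sum>h\<in>Poly_Mapping.keys b. Poly_Mapping.single (g + h) (Poly_Mapping.lookup a g * Poly_Mapping.lookup b h))"
proof -
  have "a * b = (\<Sum>g\<in>Poly_Mapping.keys a. Poly_Mapping.single g (Poly_Mapping.lookup a g)) * (\<Sum>h\<in>Poly_Mapping.keys b. Poly_Mapping.single h (Poly_Mapping.lookup b h))"
    by (simp only: pm_expand[symmetric])
  also have "\<dots> = (\<Sum>g\<in>Poly_Mapping.keys a. Poly_Mapping.single g (Poly_Mapping.lookup a g) * (\<Sum>h\<in>Poly_Mapping.keys b. Poly_Mapping.single h (Poly_Mapping.lookup b h)))"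
    by (rule sum_distrib_right)
  also have "\<dots> = (\<Sum>g\<in>Poly_Mapping.keys a. \<Sum>h\<in>Poly_Mapping.keys b. Poly_Mapping.single g (Poly_Mapping.lookup a g) * Poly_Mapping.single h (Poly_Mapping.lookup b h))"
    by (simp only: sum_distrib_left)
  finally show ?thesis by (simp only: mult_single)
qed

lemma opG_expand: "opG v = (\<Sum>g\<in>Poly_Mapping.keys v. Poly_Mapping.single (- g) (Poly_Mapping.lookup v g))"
proof -
  have "opG v = opG (\<Sum>g\<in>Poly_Mapping.keys v. Poly_Mapping.single g (Poly_Mapping.lookup v g))"
    by (simp only: pm_expand[symmetric])
  then show ?thesis by (simp only: opG_sum opG_single)
qed

lemma opG_mult: "opG (a * b) = opG b * opG (a :: 'g::group_add \<Rightarrow>\<^sub>0 'k::comm_ring_1)"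
proof -
  have "opG (a * b) = (\<Sum>g\<in>Poly_Mapping.keys a. \<Sum>h\<in>Poly_Mapping.keys b. Poly_Mapping.single (- h + - g) (Poly_Mapping.lookup b h * Poly_Mapping.lookup a g))"
    by (simp add: mult_expand opG_sum opG_single minus_add mult.commute)
  also have "\<dots> = (\<Sum>h\<in>Poly_Mapping.keys b. \<Sum>g\<in>Poly_Mapping.keys a. Poly_Mapping.single (- h + - g) (Poly_Mapping.lookup b h * Poly_Mapping.lookup a g))"
    by (rule sum.swap)
  also have "\<dots> = (\<Sum>h\<in>Poly_Mapping.keys b. Poly_Mapping.single (- h) (Poly_Mapping.lookup b h) * (\<Sum>g\<in>Poly_Mapping.keys a. Poly_Mapping.single (- g) (Poly_Mapping.lookup a g)))"
    by (simp only: sum_distrib_left mult_single)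
  also have "\<dots> = opG b * opG a"
    by (simp only: opG_expand[of a] opG_expand[of b] sum_distrib_right)
  finally show ?thesis .
qed

lemma opG_grp: "opG (grp g :: 'g::group_add \<Rightarrow>\<^sub>0 'k::comm_ring_1) = grp (- g)"
  by (rule opG_single)

lemmas opG_simps = opG_add opG_diff opG_minus opG_mult opG_grp opG_one opG_zero

lemma tens_alt:
  assumes "finite S" "finite T" "Poly_Mapping.keys a \<subseteq> S" "Poly_Mapping.keys b \<subseteq> T"
  shows "tens a b = (\<Sum>g\<in>S. \<Sum>h\<in>T. Poly_Mapping.single (g, h) (Poly_Mapping.lookup a g * Poly_Mapping.lookup b h))"
proof -
  have "tens a b = (\<Sum>g\<in>Poly_Mapping.keys a. \<Sum>h\<in>T. Poly_Mapping.single (g, h) (Poly_Mapping.lookup a g * Poly_Mapping.lookup b h))"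
    unfolding tens_def
    by (rule sum.cong[OF refl], rule sum.mono_neutral_left) (use assms in \<open>auto simp: in_keys_iff\<close>)
  also have "\<dots> = (\<Sum>g\<in>S. \<Sum>h\<in>T. Poly_Mapping.single (g, h) (Poly_Mapping.lookup a g * Poly_Mapping.lookup b h))"
    by (rule sum.mono_neutral_left) (use assms in \<open>auto simp: in_keys_iff\<close>)
  finally show ?thesis .
qed

lemma tens_add_left: "tens (a + a') b = tens a b + tens a' b"
proof -
  let ?S = "Poly_Mapping.keys a \<union> Poly_Mapping.keys a' \<union> Poly_Mapping.keys (a + a')" and ?T = "Poly_Mapping.keys b"
  have f: "finite ?S" "finite ?T" by auto
  have s1: "Poly_Mapping.keys a \<subseteq> ?S" "Poly_Mapping.keys a' \<subseteq> ?S" "Poly_Mapping.keys (a + a') \<subseteq> ?S" "Poly_Mapping.keys b \<subseteq> ?T" by auto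
  show ?thesis
    by (simp only: tens_alt[OF f s1(1) s1(4)] tens_alt[OF f s1(2) s1(4)] tens_alt[OF f s1(3) s1(4)]
        lookup_add distrib_right single_add sum.distrib)
qed

lemma tens_add_right: "tens a (b + b') = tens a b + tens a b'"
proof -
  let ?T = "Poly_Mapping.keys b \<union> Poly_Mapping.keys b' \<union> Poly_Mapping.keys (b + b')" and ?S = "Poly_Mapping.keys a"
  have f: "finite ?S" "finite ?T" by auto
  have s1: "Poly_Mapping.keys b \<subseteq> ?T" "Poly_Mapping.keys b' \<subseteq> ?T" "Poly_Mapping.keys (b + b') \<subseteq> ?T" "Poly_Mapping.keys a \<subseteq> ?S" by auto
  show ?thesis
    by (simp only: tens_alt[OF f s1(4) s1(1)] tens_alt[OF f s1(4) s1(2)] tens_alt[OF f s1(4) s1(3)]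
        lookup_add distrib_left single_add sum.distrib)
qed

lemma tens_zero_left: "tens 0 b = 0" by (simp add: tens_def)
lemma tens_zero_right: "tens a 0 = 0" by (simp add: tens_def)

lemma tens_minus_left: "tens (- a) b = - tens a b"
proof -
  have "tens a b + tens (- a) b = tens (a + - a) b" by (rule tens_add_left[symmetric])
  also have "\<dots> = 0" by (simp only: right_minus tens_zero_left)
  finally show ?thesis by (rule add_eq_0_iff[THEN iffD1])
qed

lemma tens_minus_right: "tens a (- b) = - tens a b"
proof -
  have "tens a b + tens a (- b) = tens a (b + - b)" by (rule tens_add_right[symmetric])
  also have "\<dots> = 0" by (simp only: right_minus tens_zero_right)
  finally show ?thesis by (rule add_eq_0_iff[THEN iffD1])
qed

lemma tens_diff_left: "tens (a - a') b = tens a b - tens a' b"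
  by (simp only: diff_conv_add_uminus tens_add_left tens_minus_left)

lemma tens_diff_right: "tens a (b - b') = tens a b - tens a b'"
  by (simp only: diff_conv_add_uminus tens_add_right tens_minus_right)

lemma tens_single: "tens (Poly_Mapping.single g a) (Poly_Mapping.single h b) = Poly_Mapping.single (g, h) (a * b)"
proof -
  have k1: "Poly_Mapping.keys (Poly_Mapping.single g a) \<subseteq> {g}" by simp
  have k2: "Poly_Mapping.keys (Poly_Mapping.single h b) \<subseteq> {h}" by simp
  show ?thesis
    by (simp only: tens_alt[OF finite.insertI[OF finite.emptyI] finite.insertI[OF finite.emptyI] k1 k2]
          sum.insert[OF finite.emptyI] empty_iff not_False_eq_True sum.empty add_0_right lookup_single_eq)
qed

lemma tens_grp: "tens (grp g) (grp h) = (grp (g, h) :: 'k::comm_ring_1 VB2)"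
  by (simp add: tens_single)


lemma mat3_nth [simp]:
  "mat3 [a,b,c] r2 r3 $ 1 $ 1 = a" "mat3 [a,b,c] r2 r3 $ 1 $ 2 = b" "mat3 [a,b,c] r2 r3 $ 1 $ 3 = c"
  "mat3 r1 [a,b,c] r3 $ 2 $ 1 = a" "mat3 r1 [a,b,c] r3 $ 2 $ 2 = b" "mat3 r1 [a,b,c] r3 $ 2 $ 3 = c"
  "mat3 r1 r2 [a,b,c] $ 3 $ 1 = a" "mat3 r1 r2 [a,b,c] $ 3 $ 2 = b" "mat3 r1 r2 [a,b,c] $ 3 $ 3 = c"
  by (simp_all add: mat3_def)

lemma mat_nth3 [simp]:
  "(mat x :: 'a::zero^3^3) $ 1 $ 1 = x" "(mat x :: 'a::zero^3^3) $ 1 $ 2 = 0" "(mat x :: 'a::zero^3^3) $ 1 $ 3 = 0"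
  "(mat x :: 'a::zero^3^3) $ 2 $ 1 = 0" "(mat x :: 'a::zero^3^3) $ 2 $ 2 = x" "(mat x :: 'a::zero^3^3) $ 2 $ 3 = 0"
  "(mat x :: 'a::zero^3^3) $ 3 $ 1 = 0" "(mat x :: 'a::zero^3^3) $ 3 $ 2 = 0" "(mat x :: 'a::zero^3^3) $ 3 $ 3 = x"
  by (simp_all add: mat_def)

lemma mat3_eqI:
  fixes A :: "'a^3^3"
  assumes "A$1$1 = B$1$1" "A$1$2 = B$1$2" "A$1$3 = B$1$3" "A$2$1 = B$2$1" "A$2$2 = B$2$2" "A$2$3 = B$2$3"
     "A$3$1 = B$3$1" "A$3$2 = B$3$2" "A$3$3 = B$3$3"
  shows "A = B"
  using assms unfolding vec_eq_iff forall_3 by auto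

lemma vec3_eqI:
  fixes a :: "'a^3"
  assumes "a$1 = b$1" "a$2 = b$2" "a$3 = b$3"
  shows "a = b"
  using assms unfolding vec_eq_iff forall_3 by auto

lemma mmult_nth3: "((A::'a::semiring_1^3^3) ** B) $ i $ j = A$i$1 * B$1$j + A$i$2 * B$2$j + A$i$3 * B$3$j"
  by (simp add: matrix_matrix_mult_def sum_3)

lemma mvmult_nth3: "((A::'a::semiring_1^3^3) *v v) $ i = A$i$1 * v$1 + A$i$2 * v$2 + A$i$3 * v$3"
  by (simp add: matrix_vector_mult_def sum_3)

lemma transpose_nth: "transpose A $ i $ j = A $ j $ i"
  by (simp add: transpose_def)

lemma mop_nth: "mop A $ i $ j = opG (A $ i $ j)"
  by (simp add: mop_def)

lemma matrix_inv_eq: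
  fixes A B :: "'a::semiring_1^'n^'n"
  assumes "A ** B = mat 1" "B ** A = mat 1"
  shows "matrix_inv A = B"
proof -
  have ex: "\<exists>A'::'a^'n^'n. A ** A' = mat 1 \<and> A' ** A = mat 1" using assms by blast
  define C where "C = matrix_inv A"
  have C: "A ** C = mat 1" "C ** A = mat 1"
    using someI_ex[OF ex] unfolding C_def matrix_inv_def by auto
  have "C = C ** (A ** B)" by (simp add: assms)
  also have "\<dots> = (C ** A) ** B" by (rule matrix_mul_assoc)
  also have "\<dots> = B" by (simp add: C)
  finally show ?thesis unfolding C_def .
qed

section \<open>Explicit inverses\<close>

definition rhoX0inv :: "'k::comm_ring_1 M3" where
  "rhoX0inv = mat3 [XXi False, 0, 0]
     [0, XX True * (YYi True * YYi False * YY True), XX True * (XX True - 1) * (YYi True * YYi False * YY True)]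
     [0, XXi True * XXi False - YYi True * YYi False * YY True,
         YYi True * YYi False * YY True + XXi True * XXi False * XX True - XX True * (YYi True * YYi False * YY True)]"

definition rhoX1inv :: "'k::comm_ring_1 M3" where
  "rhoX1inv = mat3 [XXi True, - (XXi True * (1 - YY True)), 0]
     [YYi True * (1 - XXi True), XXi True * YYi True * ((XX True - 1) * YY True + 1), 0]
     [0, 0, 1]"

definition Dinv :: "'k::comm_ring_1 M3" where
  "Dinv = mat3 [YYi True, 0, 0] [0, XXi True, 0] [0, 0, YYi True * YYi False * YY True * XX False * XX True]"

lemma rhoX0_inv1: "rhoX0 ** rhoX0inv = (mat 1 :: 'k::comm_ring_1 M3)"
  apply (rule mat3_eqI)
  apply (simp_all add: mmult_nth3 rhoX0_def rhoX0inv_def)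
  apply (simp_all add: eng del: add_uminus_conv_diff)
  done

lemma rhoX0_inv2: "rhoX0inv ** rhoX0 = (mat 1 :: 'k::comm_ring_1 M3)"
  apply (rule mat3_eqI)
  apply (simp_all add: mmult_nth3 rhoX0_def rhoX0inv_def)
  apply (simp_all add: eng del: add_uminus_conv_diff)
  done

lemma rhoX1_inv1: "rhoX1 ** rhoX1inv = (mat 1 :: 'k::comm_ring_1 M3)"
  apply (rule mat3_eqI)
  apply (simp_all add: mmult_nth3 rhoX1_def rhoX1inv_def)
  apply (simp_all add: eng del: add_uminus_conv_diff)
  done

lemma rhoX1_inv2: "rhoX1inv ** rhoX1 = (mat 1 :: 'k::comm_ring_1 M3)"
  apply (rule mat3_eqI)
  apply (simp_all add: mmult_nth3 rhoX1_def rhoX1inv_def)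
  apply (simp_all add: eng del: add_uminus_conv_diff)
  done

lemma Dmat_inv1: "Dmat ** Dinv = (mat 1 :: 'k::comm_ring_1 M3)"
  apply (rule mat3_eqI)
  apply (simp_all add: mmult_nth3 Dmat_def Dinv_def)
  apply (simp_all add: eng del: add_uminus_conv_diff)
  done

lemma Dmat_inv2: "Dinv ** Dmat = (mat 1 :: 'k::comm_ring_1 M3)"
  apply (rule mat3_eqI)
  apply (simp_all add: mmult_nth3 Dmat_def Dinv_def)
  apply (simp_all add: eng del: add_uminus_conv_diff)
  done

lemma matrix_inv_rhoX0: "matrix_inv rhoX0 = (rhoX0inv :: 'k::comm_ring_1 M3)"
  by (rule matrix_inv_eq[OF rhoX0_inv1 rhoX0_inv2])

lemma matrix_inv_rhoX1: "matrix_inv rhoX1 = (rhoX1inv :: 'k::comm_ring_1 M3)"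
  by (rule matrix_inv_eq[OF rhoX1_inv1 rhoX1_inv2])

lemma matrix_inv_Dmat: "matrix_inv Dmat = (Dinv :: 'k::comm_ring_1 M3)"
  by (rule matrix_inv_eq[OF Dmat_inv1 Dmat_inv2])

lemma rho_gen_inv1: "rho_gen i ** matrix_inv (rho_gen i) = (mat 1 :: 'k::comm_ring_1 M3)"
  by (cases i) (simp_all add: rho_gen_def matrix_inv_rhoX0 matrix_inv_rhoX1 rhoX0_inv1 rhoX1_inv1)

lemma rho_gen_inv2: "matrix_inv (rho_gen i) ** rho_gen i = (mat 1 :: 'k::comm_ring_1 M3)"
  by (cases i) (simp_all add: rho_gen_def matrix_inv_rhoX0 matrix_inv_rhoX1 rhoX0_inv2 rhoX1_inv2)

section \<open>rho on the group\<close>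

lemma rho_word_append: "(rho_word (a @ b) :: 'k::comm_ring_1 M3) = rho_word a ** rho_word b"
  by (induction a) (simp_all add: rho_word_def matrix_mul_assoc)

lemma rho_letter_inv: "(rho_letter x :: 'k::comm_ring_1 M3) ** rho_letter (linv x) = mat 1"
  by (cases x) (auto simp: rho_letter_def linv_def rho_gen_inv1 rho_gen_inv2)

lemma rho_word_cancel: "cancel1 x y \<Longrightarrow> (rho_word x :: 'k::comm_ring_1 M3) = rho_word y"
proof (induction rule: cancel1.induct)
  case (1 a x b)
  have "(rho_word (x # linv x # b) :: 'k M3) = (rho_letter x ** rho_letter (linv x)) ** rho_word b"
    by (simp add: rho_word_def matrix_mul_assoc)
  then show ?case by (simp add: rho_word_append rho_letter_inv)
qed

lemma rho_word_equiv: "equivclp cancel1 x y \<Longrightarrow> (rho_word x :: 'k::comm_ring_1 M3) = rho_word y"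
proof (induction rule: equivclp_induct)
  case base then show ?case by simp
next
  case (step y z)
  have "(rho_word y :: 'k M3) = rho_word z"
    using step(2) rho_word_cancel[where 'k='k, of y z] rho_word_cancel[where 'k='k, of z y] by auto
  with step(3) show ?case by simp
qed

lemma rho_grp_abs: "(rho_grp (abs_F2 w) :: 'k::comm_ring_1 M3) = rho_word w"
proof -
  have "equivclp cancel1 (rep_F2 (abs_F2 w)) w"
    by (rule Quotient3_rep_abs[OF Quotient3_F2]) simp
  then show ?thesis unfolding rho_grp_def by (rule rho_word_equiv)
qed

lemma F2_abs_rep: "abs_F2 (rep_F2 g) = g"
  by (rule Quotient3_abs_rep[OF Quotient3_F2])

lemma rho_grp_add: "(rho_grp (g + h) :: 'k::comm_ring_1 M3) = rho_grp g ** rho_grp h"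
proof -
  have "g + h = abs_F2 (rep_F2 g @ rep_F2 h)"
    by (metis F2_abs_rep plus_F2.abs_eq)
  then show ?thesis
    by (metis F2_abs_rep rho_grp_abs rho_word_append)
qed

lemma rho_grp_zero: "(rho_grp 0 :: 'k::comm_ring_1 M3) = mat 1"
proof -
  have "(rho_grp 0 :: 'k M3) = rho_grp (abs_F2 [])" by (simp only: zero_F2.abs_eq)
  also have "\<dots> = rho_word []" by (rule rho_grp_abs)
  finally show ?thesis by (simp add: rho_word_def)
qed

lemma rho_grp_gen: "(rho_grp (gen i) :: 'k::comm_ring_1 M3) = rho_gen i"
  by (simp add: gen.abs_eq rho_grp_abs rho_word_def rho_letter_def)

lemma rho_grp_neg_gen: "(rho_grp (- gen i) :: 'k::comm_ring_1 M3) = matrix_inv (rho_gen i)"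
proof -
  have "(rho_grp (- gen i) :: 'k M3) ** rho_gen i = mat 1"
    by (metis rho_grp_gen rho_grp_add left_minus rho_grp_zero)
  moreover have "rho_gen i ** (rho_grp (- gen i) :: 'k M3) = mat 1"
    by (metis rho_grp_gen rho_grp_add right_minus rho_grp_zero)
  ultimately show ?thesis using matrix_inv_eq by metis
qed


definition RR :: "F2 \<Rightarrow> 'k::comm_ring_1 M3" where
  "RR g = Dinv ** mop (transpose (rho_grp (- g))) ** Dmat"

lemma mop_tr_mult: "mop (transpose (A ** B)) = mop (transpose B) ** mop (transpose (A :: ('g::group_add \<Rightarrow>\<^sub>0 'k::comm_ring_1)^3^3)) \<and> (B :: ('g \<Rightarrow>\<^sub>0 'k)^3^3) = B"
  apply (rule conjI[OF _ refl])
  by (rule mat3_eqI) (simp_all add: mmult_nth3 mop_nth transpose_nth opG_add opG_mult)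

lemma mop_one: "mop (mat 1 :: ('g::group_add \<Rightarrow>\<^sub>0 'k::comm_ring_1)^3^3) = mat 1"
  by (rule mat3_eqI) (simp_all add: mop_nth opG_one opG_zero)

lemma mop_tr_one: "mop (transpose (mat 1 :: ('g::group_add \<Rightarrow>\<^sub>0 'k::comm_ring_1)^3^3)) = mat 1"
  by (simp add: mop_one)

lemma RR_add: "RR (g + h) = (RR g ** RR h :: 'k::comm_ring_1 M3)"
proof -
  have "rho_grp (- (g + h)) = (rho_grp (- h) ** rho_grp (- g) :: 'k M3)" by (simp only: minus_add rho_grp_add)
  then have "RR (g+h) = Dinv ** (mop (transpose (rho_grp (-g))) ** mop (transpose (rho_grp (-h)))) ** (Dmat :: 'k M3)"
    by (simp add: RR_def mop_tr_mult[THEN conjunct1])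
  also have "\<dots> = Dinv ** mop (transpose (rho_grp (-g))) ** (Dmat ** Dinv) ** mop (transpose (rho_grp (-h))) ** Dmat"
    by (simp add: Dmat_inv1 matrix_mul_assoc)
  also have "\<dots> = RR g ** RR h" by (simp add: RR_def matrix_mul_assoc)
  finally show ?thesis .
qed

lemma RR_zero: "RR 0 = (mat 1 :: 'k::comm_ring_1 M3)"
  by (simp add: RR_def rho_grp_zero mop_one Dmat_inv2)

lemma RR_X1: "RR (gen True) = (mat 1 + (\<chi> i j. r_col $ i * r_row $ j) :: 'k::comm_ring_1 M3)"
  unfolding RR_def rho_grp_neg_gen rho_gen_def if_True matrix_inv_rhoX1
  apply (rule mat3_eqI)
  apply (simp_all add: mmult_nth3 mop_nth transpose_nth rhoX1inv_def Dinv_def Dmat_def r_col_def r_row_def)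
  apply (simp_all add: opG_simps eng del: add_uminus_conv_diff)
  done

definition RX0 :: "'k::comm_ring_1 M3" where
  "RX0 = mat3 [XX False, 0, 0]
     [0, XXi True * (YYi True * YY False * YY True),
         XXi True * (YYi True * YY False * YY True) - XXi True * XXi True * XXi False * (YYi True * YY False * YY False * YY True)]
     [0, XX False - XX False * XX True,
         YYi True * YY False * YY True + XX False - XX False * XXi True * XXi False * (YYi True * YY False * YY True)]"

lemma RR_X0: "RR (gen False) = (RX0 :: 'k::comm_ring_1 M3)"
  unfolding RR_def rho_grp_neg_gen rho_gen_def if_False matrix_inv_rhoX0
  apply (rule mat3_eqI)
  apply (simp_all add: mmult_nth3 mop_nth transpose_nth rhoX0inv_def Dinv_def Dmat_def RX0_def)
  apply (simp_all add: opG_simps eng del: add_uminus_conv_diff)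
  done

definition D0 :: "F2 \<Rightarrow> 'k::comm_ring_1 VB2" where
  "D0 g = row_mat_col r_row (RR g) r_col"

lemma matrix_add_rdistrib3: "(((A::'a::semiring_1^3^3) + B) ** C) = (A ** C) + (B ** (C :: 'a::semiring_1^3^3))"
  by (rule mat3_eqI) (simp_all add: mmult_nth3 algebra_simps)

lemma rmc_add: "row_mat_col r (A + B) c = row_mat_col r A c + row_mat_col r B c"
  by (simp add: row_mat_col_def sum_3 algebra_simps)

lemma rmc_outer: "row_mat_col r (A ** (\<chi> i j. c$i * r$j) ** B) c = row_mat_col r A c * row_mat_col r B (c :: 'a::semiring_1^3)"
  by (simp add: row_mat_col_def sum_3 mmult_nth3 algebra_simps)

lemma D0_mult: "D0 a * D0 b = D0 (a + gen True + b) - (D0 (a + b) :: 'k::comm_ring_1 VB2)"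
proof -
  have "(RR (a + gen True + b) :: 'k M3) = RR a ** RR b + RR a ** (\<chi> i j. r_col $ i * r_row $ j) ** RR b"
    by (simp add: RR_add RR_X1 matrix_add_ldistrib matrix_add_rdistrib3)
  then show ?thesis
    by (simp add: D0_def RR_add rmc_add rmc_outer)
qed


lemma iter_comm: "((+) g ^^ m) 0 + g = g + ((+) g ^^ m) (0::'g::group_add)"
  by (induction m) (simp_all add: add.assoc)

lemma zpow_zero: "zpow g 0 = 0"
  by (simp add: zpow_def)

lemma zpow_succ: "zpow g (n + 1) = g + zpow (g::'g::group_add) n"
proof (cases "0 \<le> n")
  case True
  then have "nat (n+1) = Suc (nat n)" by simp
  then show ?thesis using True by (simp add: zpow_def)
next
  case False
  show ?thesis
  proof (cases "n = -1")
    case True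
    then show ?thesis by (simp add: zpow_def)
  next
    case False2: False
    define P where "P = ((+) g ^^ nat (- (n + 1))) 0"
    have m: "nat (- n) = Suc (nat (- (n + 1)))" using False False2 by arith
    have a: "zpow g n = - (g + P)" using False by (simp add: zpow_def m P_def)
    have b: "zpow g (n + 1) = - P" using False False2 by (simp add: zpow_def P_def)
    have "g + - (g + P) = g + - (P + g)" by (simp add: P_def iter_comm)
    also have "\<dots> = - P" by (simp add: minus_add add.assoc del: add_uminus_conv_diff)
    finally show ?thesis using a b by simp
  qed
qed

lemma zpow_pred: "zpow g (n - 1) = - g + zpow (g::'g::group_add) n"
  using zpow_succ[of g "n - 1"] by (simp add: minus_add_cancel del: add_uminus_conv_diff)

lemma zpow_succ': "zpow g (1 + n) = g + zpow (g::'g::group_add) n"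
  using zpow_succ[of g n] by (simp add: add.commute)

lemma zpow_pred': "zpow g (-1 + n) = - g + zpow (g::'g::group_add) n"
  using zpow_pred[of g n] by simp

lemma zpow_comm: "zpow g n + g = g + zpow (g::'g::group_add) n"
proof (induction n rule: int_induct[where k=0])
  case base then show ?case by (simp add: zpow_zero)
next
  case (step1 i)
  then show ?case by (simp add: zpow_succ add.assoc)
next
  case (step2 i)
  have "zpow g (i - 1) + g = - g + (zpow g i + g)" by (simp add: zpow_pred add.assoc del: add_uminus_conv_diff)
  also have "\<dots> = zpow g i" using step2 by (simp add: add.assoc[symmetric] del: add_uminus_conv_diff)
  also have "\<dots> = g + zpow g (i - 1)" by (simp add: zpow_pred add.assoc[symmetric] del: add_uminus_conv_diff)
  finally show ?case .
qed

lemma zpow_one: "zpow g 1 = (g::'g::group_add)"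
  using zpow_succ[of g 0] by (simp add: zpow_zero)

lemma zc1: "zpow g n + g = g + zpow (g::F2) n" by (rule zpow_comm)
lemma zc2: "zpow g n + (g + x) = g + (zpow (g::F2) n + x)" by (simp add: add.assoc[symmetric] zpow_comm)
lemma zc3: "zpow g n + - g = - g + zpow (g::F2) n"
proof -
  have "zpow g n + - g = - g + (g + zpow g n) + - g" by (simp add: add.assoc[symmetric] del: add_uminus_conv_diff)
  also have "\<dots> = - g + (zpow g n + g) + - g" by (simp add: zpow_comm)
  also have "\<dots> = - g + zpow g n" by (simp add: add.assoc del: add_uminus_conv_diff)
  finally show ?thesis .
qed
lemma zc4: "zpow g n + (- g + x) = - g + (zpow (g::F2) n + x)" by (simp add: add.assoc[symmetric] zc3 del: add_uminus_conv_diff)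

lemmas zeng = zc1 zc2 zc3 zc4 zpow_succ zpow_pred zpow_succ' zpow_pred' zpow_zero zpow_one

lemma gsum_last: "gsum p q f = gsum p (q - 1) f + f (q :: int)"
proof (cases "p - 1 \<le> q - 1")
  case True
  have s: "{p..q} = insert q {p..q - 1}" using True by auto
  show ?thesis using True by (simp add: gsum_def s)
next
  case False
  show ?thesis
  proof (cases "p - 1 = q")
    case True then show ?thesis by (simp add: gsum_def)
  next
    case False2: False
    have s: "{q..p - 1} = insert q {q + 1..p - 1}" using False False2 by auto
    show ?thesis using False False2 by (simp add: gsum_def s)
  qed
qed

lemma gsum_first: "gsum p q f = f p + gsum (p + 1) q (f :: int \<Rightarrow> 'a::ab_group_add)"
proof (cases "p \<le> q")
  case True
  have s: "{p..q} = insert p {p + 1..q}" using True by auto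
  show ?thesis using True by (simp add: gsum_def s)
next
  case False
  show ?thesis
  proof (cases "p - 1 = q")
    case True then have "q = p - 1" by simp
    then show ?thesis by (simp add: gsum_def)
  next
    case False2: False
    have s: "{q + 1..p} = insert p {q + 1..p - 1}" using False False2 by auto
    show ?thesis using False False2 by (simp add: gsum_def s)
  qed
qed

lemma sum_shift_int: "(\<Sum>k\<in>{a..b}. f (k + 1)) = (\<Sum>k\<in>{a + 1..b + 1::int}. f k)"
  by (rule sum.reindex_bij_witness[of _ "\<lambda>k. k - 1" "\<lambda>k. k + 1"]) auto

lemma gsum_shift: "gsum p q (\<lambda>k. f (k + 1)) = gsum (p + 1) (q + 1) f"
proof -
  have s: "(\<Sum>k\<in>{q + 1..p - 1}. f (k + 1)) = (\<Sum>k\<in>{q + 1 + 1..p + 1 - 1}. f k)"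
    using sum_shift_int[of f "q + 1" "p - 1"] by simp
  show ?thesis by (simp add: gsum_def sum_shift_int s)
qed

lemma gsum_mult_left: "c * gsum p q f = gsum p q (\<lambda>k. c * f k :: 'a::ring)"
  by (simp add: gsum_def sum_distrib_left)

lemma gsum_cong:
  assumes "\<And>k. f k = g k" shows "gsum p q f = gsum p q g"
proof -
  have "f = g" using assms by (rule ext)
  then show ?thesis by simp
qed

definition Aa :: "int \<Rightarrow> 'k::comm_ring_1 VB2" where
  "Aa k = grp (zpow (gen False) k, 0) * (XX True - 1)"
definition Bb :: "int \<Rightarrow> 'k::comm_ring_1 VB2" where
  "Bb k = grp (0, zpow (gen False) k) * (YY True - 1)"
definition Tt :: "int \<Rightarrow> int \<Rightarrow> 'k::comm_ring_1 VB2" where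
  "Tt k j = Aa k * (YYi True * Bb j)"
definition Gg :: "int \<Rightarrow> 'k::comm_ring_1 VB2" where
  "Gg n = gsum 1 (n - 1) (\<lambda>k. Tt k (n - k))"
definition vv :: "int \<Rightarrow> 'k::comm_ring_1 VB2 ^ 3" where
  "vv n = vector [Aa n * YYi True, XXi True * (Gg n - YYi True * Bb n), Aa n * (1 - YYi True) + Gg n]"

lemma TU: "(YYi True * YY False * YY True) * Tt k j = (Tt k (j + 1) :: 'k::comm_ring_1 VB2)"
  by (simp add: Tt_def Aa_def Bb_def zeng eng del: add_uminus_conv_diff)

lemma TX: "XX False * Tt k j = (Tt (k + 1) j :: 'k::comm_ring_1 VB2)"
  by (simp add: Tt_def Aa_def Bb_def zeng eng del: add_uminus_conv_diff)

lemma K1: "(YYi True * YY False * YY True) * Gg n = Gg (n + 1) - (Tt n 1 :: 'k::comm_ring_1 VB2)"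
proof -
  have "(YYi True * YY False * YY True) * Gg n = gsum 1 (n - 1) (\<lambda>k. (YYi True * YY False * YY True) * (Tt k (n - k) :: 'k VB2))"
    by (simp add: Gg_def gsum_mult_left)
  also have "\<dots> = gsum 1 (n - 1) (\<lambda>k. Tt k (n + 1 - k))"
  proof (rule gsum_cong)
    fix k
    have eq: "n + 1 - k = (n - k) + 1" by simp
    show "(YYi True * YY False * YY True) * (Tt k (n - k) :: 'k VB2) = Tt k (n + 1 - k)"
      by (simp only: eq TU)
  qed
  also have "\<dots> = Gg (n + 1) - Tt n 1"
    using gsum_last[of 1 n "\<lambda>k. Tt k (n + 1 - k) :: 'k VB2"] by (simp add: Gg_def eq_diff_eq)
  finally show ?thesis .
qed

lemma K2: "XX False * Gg n = Gg (n + 1) - (Tt 1 n :: 'k::comm_ring_1 VB2)"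
proof -
  have "XX False * Gg n = gsum 1 (n - 1) (\<lambda>k. XX False * (Tt k (n - k) :: 'k VB2))"
    by (simp add: Gg_def gsum_mult_left)
  also have "\<dots> = gsum 1 (n - 1) (\<lambda>k. (\<lambda>k. Tt k (n + 1 - k)) (k + 1))"
    by (rule gsum_cong) (simp add: TX algebra_simps)
  also have "\<dots> = gsum 2 n (\<lambda>k. Tt k (n + 1 - k))"
    using gsum_shift[of 1 "n - 1" "\<lambda>k. Tt k (n + 1 - k) :: 'k VB2"] by simp
  also have "\<dots> = Gg (n + 1) - Tt 1 n"
    using gsum_first[of 1 n "\<lambda>k. Tt k (n + 1 - k) :: 'k VB2"] by (simp add: Gg_def eq_diff_eq)
  finally show ?thesis .
qed

lemma K3: "Gg n - XXi False * ((YYi True * YY False * YY True) * Gg n) = XXi False * (Tt n 1 - (Tt 1 n :: 'k::comm_ring_1 VB2))"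
proof -
  have e: "XX False * Gg n - (YYi True * YY False * YY True) * Gg n = Tt n 1 - (Tt 1 n :: 'k VB2)"
    by (simp add: K1 K2)
  have "Gg n - XXi False * ((YYi True * YY False * YY True) * Gg n)
      = XXi False * (XX False * Gg n - (YYi True * YY False * YY True) * (Gg n :: 'k VB2))"
    by (simp add: eng del: add_uminus_conv_diff)
  then show ?thesis by (simp only: e)
qed


lemma step_vv: "RX0 *v vv n = (vv (n + 1) :: 'k::comm_ring_1 VB2 ^ 3)"
proof (rule vec3_eqI)
  define g where "g = (Gg n :: 'k VB2)"
  define g' where "g' = (Gg (n + 1) :: 'k VB2)"
  have k1: "(YYi True * YY False * YY True) * g = g' - Tt n 1" by (simp add: g_def g'_def K1)
  have k3: "g - XXi False * ((YYi True * YY False * YY True) * g) = XXi False * (Tt n 1 - Tt 1 n)"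
    by (simp add: g_def K3)
  show "(RX0 *v vv n) $ 1 = vv (n + 1) $ 1"
    by (simp add: mvmult_nth3 RX0_def vv_def Aa_def zeng eng del: add_uminus_conv_diff)
  define F2 where "F2 = (\<lambda>x::'k VB2. (XXi True * (YYi True * YY False * YY True)) * (XXi True * (x - YYi True * Bb n))
     + (XXi True * (YYi True * YY False * YY True) - XXi True * XXi True * XXi False * (YYi True * YY False * YY False * YY True))
        * (Aa n * (1 - YYi True) + x))"
  have a2: "(RX0 *v vv n) $ 2 = F2 g" by (simp add: mvmult_nth3 RX0_def vv_def g_def F2_def)
  also have "\<dots> = (XXi True * ((YYi True * YY False * YY True) * g)
       + XXi True * XXi True * ((YYi True * YY False * YY True) * (g - XXi False * ((YYi True * YY False * YY True) * g)))) + F2 0"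
    by (simp add: F2_def eng del: add_uminus_conv_diff)
  also have "\<dots> = (XXi True * ((YYi True * YY False * YY True) * g)
       + XXi True * XXi True * ((YYi True * YY False * YY True) * (XXi False * (Tt n 1 - Tt 1 n)))) + F2 0"
    by (simp only: k3)
  also have "\<dots> = (XXi True * (g' - Tt n 1)
       + XXi True * XXi True * ((YYi True * YY False * YY True) * (XXi False * (Tt n 1 - Tt 1 n)))) + F2 0"
    by (simp only: k1)
  also have "\<dots> = vv (n + 1) $ 2"
    by (simp add: vv_def F2_def g'_def Tt_def Aa_def Bb_def zeng eng del: add_uminus_conv_diff)
  finally show "(RX0 *v vv n) $ 2 = (vv (n + 1) :: 'k VB2^3) $ 2" .
  define F3 where "F3 = (\<lambda>x::'k VB2. (XX False - XX False * XX True) * (XXi True * (x - YYi True * Bb n))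
     + (YYi True * YY False * YY True + XX False - XX False * XXi True * XXi False * (YYi True * YY False * YY True))
        * (Aa n * (1 - YYi True) + x))"
  have a3: "(RX0 *v vv n) $ 3 = F3 g" by (simp add: mvmult_nth3 RX0_def vv_def g_def F3_def)
  also have "\<dots> = ((YYi True * YY False * YY True) * g
       + XX False * XXi True * (g - XXi False * ((YYi True * YY False * YY True) * g))) + F3 0"
    by (simp add: F3_def eng del: add_uminus_conv_diff)
  also have "\<dots> = ((YYi True * YY False * YY True) * g
       + XX False * XXi True * (XXi False * (Tt n 1 - Tt 1 n))) + F3 0"
    by (simp only: k3)
  also have "\<dots> = ((g' - Tt n 1)
       + XX False * XXi True * (XXi False * (Tt n 1 - Tt 1 n))) + F3 0"
    by (simp only: k1)
  also have "\<dots> = vv (n + 1) $ 3"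
    by (simp add: vv_def F3_def g'_def Tt_def Aa_def Bb_def zeng eng del: add_uminus_conv_diff)
  finally show "(RX0 *v vv n) $ 3 = (vv (n + 1) :: 'k VB2^3) $ 3" .
qed

lemma Gg0: "Gg 0 = - (Tt 0 0 :: 'k::comm_ring_1 VB2)"
  by (simp add: Gg_def gsum_def)

lemma RR_zpow: "RR (zpow (gen False) n) *v r_col = (vv n :: 'k::comm_ring_1 VB2 ^ 3)"
proof (induction n rule: int_induct[where k=0])
  case base
  show ?case
    apply (simp add: zpow_zero RR_zero)
    apply (rule vec3_eqI)
     apply (simp_all add: vv_def r_col_def Gg0 Tt_def Aa_def Bb_def zeng eng del: add_uminus_conv_diff)
    done
next
  case (step1 i)
  have "RR (zpow (gen False) (i + 1)) *v r_col = RX0 *v (RR (zpow (gen False) i) *v (r_col :: 'k VB2 ^ 3))"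
    by (simp add: zpow_succ RR_add RR_X0 matrix_vector_mul_assoc)
  then show ?case using step1 by (simp add: step_vv)
next
  case (step2 i)
  have e: "vv i = RX0 *v (vv (i - 1) :: 'k VB2 ^ 3)" using step_vv[where 'k='k, of "i - 1"] by simp
  have "RR (zpow (gen False) (i - 1)) *v r_col = RR (- gen False) *v (RR (zpow (gen False) i) *v (r_col :: 'k VB2 ^ 3))"
    by (simp add: zpow_pred RR_add matrix_vector_mul_assoc)
  also have "\<dots> = RR (- gen False) *v (RR (gen False) *v vv (i - 1))"
    using step2 by (simp add: e RR_X0)
  also have "\<dots> = vv (i - 1)"
    by (simp add: matrix_vector_mul_assoc RR_add[symmetric] RR_zero)
  finally show ?case .
qed

lemma rmc3: "row_mat_col r M c = r$1 * (M *v c)$1 + r$2 * (M *v c)$2 + r$3 * (M *v c)$3"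
  by (simp add: row_mat_col_def sum_3 mvmult_nth3 algebra_simps)

lemma D0_zpow: "D0 (zpow (gen False) n) = Aa n + Bb n - gsum 1 (n - 1) (\<lambda>k. Aa k * Bb (n - k) :: 'k::comm_ring_1 VB2)"
proof -
  have "D0 (zpow (gen False) n) = Aa n + Bb n - YY True * (Gg n :: 'k VB2)"
    unfolding D0_def rmc3 RR_zpow
    by (simp add: r_row_def vv_def Aa_def eng del: add_uminus_conv_diff)
  also have "YY True * (Gg n :: 'k VB2) = gsum 1 (n - 1) (\<lambda>k. Aa k * Bb (n - k))"
    unfolding Gg_def gsum_mult_left
    by (rule gsum_cong) (simp add: Tt_def Aa_def eng del: add_uminus_conv_diff)
  finally show ?thesis .
qed


section \<open>Linear expansion of Delta_Omat\<close>

lemma uminus_image_iff: "(h::'g::group_add) \<in> uminus ` K \<longleftrightarrow> - h \<in> K"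
proof
  assume "h \<in> uminus ` K"
  then obtain x where "x \<in> K" "h = - x" by blast
  then show "- h \<in> K" by simp
next
  assume "- h \<in> K"
  then have "- (- h) \<in> uminus ` K" by (rule imageI)
  then show "h \<in> uminus ` K" by simp
qed

lemma keys_opG: "Poly_Mapping.keys (opG v) = uminus ` Poly_Mapping.keys v"
  by (rule set_eqI) (simp add: in_keys_iff lookup_opG uminus_image_iff)

lemma rho_opG: "rho (opG v) = (\<Sum>g\<in>Poly_Mapping.keys v. mscale (scal (Poly_Mapping.lookup v g)) (rho_grp (- g)) :: 'k::comm_ring_1 M3)"
proof -
  have inj: "inj_on uminus (Poly_Mapping.keys v)" by (simp add: inj_on_def)
  show ?thesis
    unfolding rho_def keys_opG sum.reindex[OF inj]
    by (simp add: lookup_opG)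
qed

lemma mtr_add: "mop (transpose (A + B)) = mop (transpose A) + mop (transpose (B :: 'k::comm_ring_1 M3))"
  by (rule mat3_eqI) (simp_all add: mop_nth transpose_nth opG_add)

lemma mtr_zero: "mop (transpose (0 :: 'k::comm_ring_1 M3)) = 0"
  by (rule mat3_eqI) (simp_all add: mop_nth transpose_nth opG_zero)

lemma mtr_sum: "mop (transpose (sum f K)) = (\<Sum>g\<in>K. mop (transpose (f g :: 'k::comm_ring_1 M3)))"
  by (induction K rule: infinite_finite_induct) (simp_all add: mtr_add mtr_zero)

lemma opG_scal: "opG (scal c :: 'k::comm_ring_1 VB2) = scal c"
  by (simp add: opG_single)

lemma mtr_mscale: "mop (transpose (mscale (scal c) M)) = mscale (scal c) (mop (transpose (M :: 'k::comm_ring_1 M3)))"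
  by (rule mat3_eqI) (simp_all add: mop_nth transpose_nth mscale_def opG_mult opG_scal scal_central)

lemma mscale_left: "(A :: 'k::comm_ring_1 M3) ** mscale (scal c) M = mscale (scal c) (A ** (M :: 'k::comm_ring_1 M3))"
proof -
  have s: "\<And>a b. a * (scal c * b) = scal c * (a * b :: 'k VB2)"
    by (metis mult.assoc scal_central)
  show ?thesis by (rule mat3_eqI) (simp_all add: mmult_nth3 mscale_def s distrib_left)
qed

lemma mscale_right: "mscale (scal c) (M :: 'k::comm_ring_1 M3) ** A = mscale (scal c) (M ** (A :: 'k::comm_ring_1 M3))"
  by (rule mat3_eqI) (simp_all add: mmult_nth3 mscale_def mult.assoc distrib_left)

lemma mmult_sum_left: "A ** sum f K = (\<Sum>g\<in>K. A ** (f g :: 'k::comm_ring_1 M3))"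
  by (induction K rule: infinite_finite_induct) (simp_all add: matrix_add_ldistrib)

lemma mmult_sum_right: "sum f K ** (A :: 'k::comm_ring_1 M3) = (\<Sum>g\<in>K. (f g :: 'k::comm_ring_1 M3) ** A)"
  by (induction K rule: infinite_finite_induct) (simp_all add: matrix_add_rdistrib3)

lemma rmc_zero: "row_mat_col r (0 :: 'k::comm_ring_1 M3) c = 0"
  by (simp add: row_mat_col_def)

lemma rmc_mscale: "row_mat_col r (mscale (scal c) M) c' = scal c * row_mat_col r (M :: 'k::comm_ring_1 M3) c'"
proof -
  have s: "\<And>a b. a * (scal c * b) = scal c * (a * b :: 'k VB2)"
    by (metis mult.assoc scal_central)
  show ?thesis by (simp add: row_mat_col_def mscale_def sum_3 distrib_left s mult.assoc)
qed

lemma rmc_sum: "row_mat_col r (sum f K) c = (\<Sum>g\<in>K. row_mat_col r (f g :: 'k::comm_ring_1 M3) c)"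
  by (induction K rule: infinite_finite_induct) (simp_all add: rmc_add rmc_zero)

lemma Delta_Omat_expand:
  "Delta_Omat c v = scal c + (\<Sum>g\<in>Poly_Mapping.keys v. scal (Poly_Mapping.lookup v g) * (D0 g :: 'k::comm_ring_1 VB2))"
proof -
  have "r_rho v = (\<Sum>g\<in>Poly_Mapping.keys v. mscale (scal (Poly_Mapping.lookup v g)) (RR g :: 'k M3))"
    unfolding r_rho_def rho_opG mtr_sum mtr_mscale mmult_sum_left mmult_sum_right matrix_inv_Dmat
    by (simp add: mscale_left mscale_right RR_def matrix_mul_assoc)
  then show ?thesis
    by (simp add: Delta_Omat_def rmc_sum rmc_mscale D0_def)
qed

lemma single_as: "Poly_Mapping.single g c * x = scal c * (grp g * x :: 'k::comm_ring_1 VB)"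
  by (simp only: mult.assoc[symmetric] scal_grp)

lemma v_expand: "v * (X True - 1) = (\<Sum>g\<in>Poly_Mapping.keys v. scal (Poly_Mapping.lookup v g) * (grp g * (X True - 1)) :: 'k::comm_ring_1 VB)"
proof -
  have "v * (X True - 1) = (\<Sum>g\<in>Poly_Mapping.keys v. Poly_Mapping.single g (Poly_Mapping.lookup v g)) * (X True - 1 :: 'k VB)"
    by (simp only: pm_expand[symmetric])
  also have "\<dots> = (\<Sum>g\<in>Poly_Mapping.keys v. Poly_Mapping.single g (Poly_Mapping.lookup v g) * (X True - 1))"
    by (rule sum_distrib_right)
  also have "\<dots> = (\<Sum>g\<in>Poly_Mapping.keys v. scal (Poly_Mapping.lookup v g) * (grp g * (X True - 1)))"
    by (rule sum.cong[OF refl]) (rule single_as)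
  finally show ?thesis .
qed

lemma X0A: "X0pow k * (X True - 1) = grp (zpow (gen False) k + gen True) - (grp (zpow (gen False) k) :: 'k::comm_ring_1 VB)"
  by (simp add: eng del: add_uminus_conv_diff)

lemma tens_one_right: "tens (grp g) (1 :: 'k::comm_ring_1 VB) = grp (g, 0)"
  using tens_grp[where 'k='k, of g 0] by simp

lemma tens_one_left: "tens (1 :: 'k::comm_ring_1 VB) (grp g) = grp (0, g)"
  using tens_grp[where 'k='k, of 0 g] by simp

lemma tensA1: "tens (X0pow n * (X True - 1)) 1 = (Aa n :: 'k::comm_ring_1 VB2)"
  unfolding X0A tens_diff_left tens_one_right
  by (simp add: Aa_def eng del: add_uminus_conv_diff)

lemma tens1A: "tens 1 (X0pow n * (X True - 1)) = (Bb n :: 'k::comm_ring_1 VB2)"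
  unfolding X0A tens_diff_right tens_one_left
  by (simp add: Bb_def eng del: add_uminus_conv_diff)

lemma tensAB: "tens (X0pow k * (X True - 1)) (X0pow j * (X True - 1)) = (Aa k * Bb j :: 'k::comm_ring_1 VB2)"
  unfolding X0A tens_diff_left tens_diff_right tens_grp
  by (simp add: Aa_def Bb_def eng del: add_uminus_conv_diff)

lemma prodWB: "grp a * (X True - 1) * (grp b * (X True - 1)) =
   grp (a + gen True + b) * (X True - 1) - grp (a + b) * (X True - (1 :: 'k::comm_ring_1 VB))"
  by (simp add: eng del: add_uminus_conv_diff)

lemma D0_0: "1 + D0 0 = (grp (gen True, gen True) :: 'k::comm_ring_1 VB2)"
proof -
  have e: "(D0 0 :: 'k VB2) = Aa 0 + Bb 0 - gsum 1 (0 - 1) (\<lambda>k. Aa k * Bb (0 - k))"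
    using D0_zpow[where 'k='k, of 0] by (simp only: zpow_zero)
  show ?thesis unfolding e
    by (simp add: gsum_def Aa_def Bb_def zeng eng del: add_uminus_conv_diff)
qed


lemma wb_intro: "scal c + v * (X True - 1) \<in> WB"
  unfolding WB_def by blast

lemma wb_elim:
  assumes "a \<in> WB" obtains c v where "a = scal c + v * (X True - 1)"
  using assms unfolding WB_def by blast

lemma wb_add: assumes "a \<in> WB" "b \<in> WB" shows "a + b \<in> (WB :: 'k::comm_ring_1 VB set)"
proof -
  obtain c v where a: "a = scal c + v * (X True - 1)" using assms(1) by (rule wb_elim)
  obtain c' v' where b: "b = scal c' + v' * (X True - 1)" using assms(2) by (rule wb_elim)
  have "a + b = scal (c + c') + (v + v') * (X True - 1)"
    by (simp add: a b single_add distrib_right)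
  then show ?thesis by (simp add: wb_intro)
qed

lemma wb_scal: assumes "a \<in> WB" shows "scal c * a \<in> (WB :: 'k::comm_ring_1 VB set)"
proof -
  obtain c' v where a: "a = scal c' + v * (X True - 1)" using assms(1) by (rule wb_elim)
  have "scal c * a = scal (c * c') + (scal c * v) * (X True - 1)"
    by (simp add: a distrib_left mult_single mult.assoc)
  then show ?thesis by (simp add: wb_intro)
qed

lemma wb_zero: "(0 :: 'k::comm_ring_1 VB) \<in> WB"
  using wb_intro[of 0 0] by simp

lemma wb_one: "(1 :: 'k::comm_ring_1 VB) \<in> WB"
  using wb_intro[of 1 0] by simp

lemma wb_grp: "grp g * (X True - 1) \<in> (WB :: 'k::comm_ring_1 VB set)"
  using wb_intro[of 0 "grp g"] by simp

lemma wb_sum: "(\<And>g. g \<in> K \<Longrightarrow> f g \<in> WB) \<Longrightarrow> sum f K \<in> (WB :: 'k::comm_ring_1 VB set)"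
  by (induction K rule: infinite_finite_induct) (simp_all add: wb_zero wb_add)

lemma scal_m1: "scal (-1) = (- 1 :: 'g::monoid_add \<Rightarrow>\<^sub>0 'k::comm_ring_1)"
  by (simp add: single_uminus)

lemma wb_neg: assumes "b \<in> WB" shows "- b \<in> (WB :: 'k::comm_ring_1 VB set)"
  using wb_scal[OF assms, of "-1"] by (simp add: scal_m1)

context
  fixes Delta :: "'k::comm_ring_1 VB \<Rightarrow> 'k VB2"
  assumes one: "Delta 1 = 1"
    and add: "\<forall>a\<in>WB. \<forall>b\<in>WB. Delta (a + b) = Delta a + Delta b"
    and smul: "\<forall>c. \<forall>a\<in>WB. Delta (scal c * a) = scal c * Delta a"
    and mult: "\<forall>a\<in>WB. \<forall>b\<in>WB. Delta (a * b) = Delta a * Delta b"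
    and gen0: "\<forall>n::int. Delta (X0pow n * (X True - 1)) =
                 tens (X0pow n * (X True - 1)) 1 + tens 1 (X0pow n * (X True - 1))
               - gsum 1 (n - 1) (\<lambda>k. tens (X0pow k * (X True - 1)) (X0pow (n - k) * (X True - 1)))"
begin

lemma D_add: "a \<in> WB \<Longrightarrow> b \<in> WB \<Longrightarrow> Delta (a + b) = Delta a + Delta b"
  using add by blast

lemma D_zero: "Delta 0 = 0"
  using D_add[OF wb_zero wb_zero] by simp

lemma D_neg: "b \<in> WB \<Longrightarrow> Delta (- b) = - Delta b"
  using smul[rule_format, of b "-1"] by (simp add: scal_m1)

lemma D_diff: "a \<in> WB \<Longrightarrow> b \<in> WB \<Longrightarrow> Delta (a - b) = Delta a - Delta b"
  using D_add[of a "- b"] D_neg[of b] wb_neg[of b] by simp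

lemma D_sum: "(\<And>g. g \<in> K \<Longrightarrow> f g \<in> WB) \<Longrightarrow> Delta (sum f K) = (\<Sum>g\<in>K. Delta (f g))"
proof (induction K rule: infinite_finite_induct)
  case (infinite A) then show ?case by (simp add: D_zero)
next
  case empty then show ?case by (simp add: D_zero)
next
  case (insert x F)
  have "Delta (sum f (insert x F)) = Delta (f x + sum f F)" using insert by simp
  also have "\<dots> = Delta (f x) + Delta (sum f F)"
    using insert by (intro D_add wb_sum) auto
  also have "\<dots> = (\<Sum>g\<in>insert x F. Delta (f g))" using insert by simp
  finally show ?case .
qed

lemma D_gen0: "Delta (grp (zpow (gen False) n) * (X True - 1)) = D0 (zpow (gen False) n)"
  using gen0[rule_format, of n] by (simp add: tensA1 tens1A tensAB D0_zpow)

lemma D_rel: "Delta (grp a * (X True - 1)) * Delta (grp b * (X True - 1)) =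
   Delta (grp (a + gen True + b) * (X True - 1)) - Delta (grp (a + b) * (X True - 1))"
proof -
  have "Delta (grp a * (X True - 1)) * Delta (grp b * (X True - 1)) = Delta (grp a * (X True - 1) * (grp b * (X True - 1)))"
    using mult wb_grp by metis
  also have "\<dots> = Delta (grp (a + gen True + b) * (X True - 1)) - Delta (grp (a + b) * (X True - 1))"
    by (simp only: prodWB D_diff[OF wb_grp wb_grp])
  finally show ?thesis .
qed

lemma clos1:
  assumes "Delta (grp a * (X True - 1)) = D0 a" "Delta (grp b * (X True - 1)) = D0 b"
    "Delta (grp (a + b) * (X True - 1)) = D0 (a + b)"
  shows "Delta (grp (a + gen True + b) * (X True - 1)) = D0 (a + gen True + b)"
proof -
  have r: "Delta (grp (a + gen True + b) * (X True - 1)) = Delta (grp a * (X True - 1)) * Delta (grp b * (X True - 1)) + Delta (grp (a + b) * (X True - 1))"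
    using D_rel[of a b] by (simp add: eq_diff_eq)
  have s: "D0 (a + gen True + b) = D0 a * D0 b + (D0 (a + b) :: 'k VB2)"
    using D0_mult[where 'k='k, of a b] by (simp add: eq_diff_eq)
  show ?thesis using r s assms by simp
qed

lemma clos2:
  assumes "Delta (grp a * (X True - 1)) = D0 a" "Delta (grp b * (X True - 1)) = D0 b"
    "Delta (grp (a + gen True + b) * (X True - 1)) = D0 (a + gen True + b)"
  shows "Delta (grp (a + b) * (X True - 1)) = D0 (a + b)"
proof -
  have r: "Delta (grp (a + b) * (X True - 1)) = Delta (grp (a + gen True + b) * (X True - 1)) - Delta (grp a * (X True - 1)) * Delta (grp b * (X True - 1))"
    using D_rel[of a b] by (simp add: algebra_simps)
  have s: "D0 (a + b) = D0 (a + gen True + b) - D0 a * (D0 b :: 'k VB2)"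
    using D0_mult[where 'k='k, of a b] by (simp add: algebra_simps)
  show ?thesis using r s assms by simp
qed

lemma SS0: "Delta (X True - 1) = D0 0"
  using D_gen0[of 0] by (simp add: zpow_zero)

lemma clos3:
  assumes "Delta (grp g * (X True - 1)) = D0 g"
  shows "Delta (grp (g + - gen True) * (X True - 1)) = D0 (g + - gen True)"
proof -
  define a where "a = g + - gen True"
  have ag: "a + gen True + 0 = g" by (simp add: a_def add.assoc)
  have a0: "a + 0 = a" by simp
  define W where "W = (grp (gen True, gen True) :: 'k VB2)"
  define W' where "W' = (grp (- gen True, - gen True) :: 'k VB2)"
  have WW: "W * W' = 1" by (simp add: W_def W'_def mult_single grp00[symmetric])
  have "Delta (grp a * (X True - 1)) * Delta (grp 0 * (X True - 1)) = Delta (grp g * (X True - 1)) - Delta (grp a * (X True - 1))"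
    using D_rel[of a 0] by (simp only: ag a0)
  then have e1: "Delta (grp a * (X True - 1)) * (1 + D0 0) = Delta (grp g * (X True - 1))"
    by (simp add: SS0 distrib_left)
  have "D0 a * D0 0 = D0 g - (D0 a :: 'k VB2)"
    using D0_mult[where 'k='k, of a 0] by (simp only: ag a0)
  then have e2: "D0 a * (1 + D0 0) = (D0 g :: 'k VB2)"
    by (simp add: distrib_left)
  have "Delta (grp a * (X True - 1)) * W = D0 a * W"
    using e1 e2 assms by (simp add: D0_0 W_def)
  then have "Delta (grp a * (X True - 1)) * W * W' = D0 a * W * W'" by simp
  then show ?thesis by (simp add: mult.assoc WW a_def)
qed

lemma abs_snoc: "abs_F2 (w @ [x]) = abs_F2 w + abs_F2 [x]"
  by (simp add: plus_F2.abs_eq)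

lemma abs_letter: "abs_F2 [(i, False)] = gen i" "abs_F2 [(i, True)] = - gen i"
proof -
  show "abs_F2 [(i, False)] = gen i" by (simp add: gen.abs_eq)
  have "- abs_F2 [(i, False)] = abs_F2 [(i, True)]"
    by (simp add: uminus_F2.abs_eq winv_def linv_def)
  then show "abs_F2 [(i, True)] = - gen i" by (simp add: gen.abs_eq)
qed

lemma SS_word: "\<forall>n. Delta (grp (abs_F2 w + zpow (gen False) n) * (X True - 1)) = D0 (abs_F2 w + zpow (gen False) n)"
proof (induction w rule: rev_induct)
  case Nil
  have "abs_F2 [] = (0 :: F2)" by (simp add: zero_F2.abs_eq)
  then show ?case by (simp add: D_gen0)
next
  case (snoc x w)
  define h where "h = abs_F2 w"
  have IH: "\<And>n. Delta (grp (h + zpow (gen False) n) * (X True - 1)) = D0 (h + zpow (gen False) n)"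
    using snoc unfolding h_def by blast
  have Sh: "Delta (grp h * (X True - 1)) = D0 h" using IH[of 0] by (simp add: zpow_zero)
  obtain i s where x: "x = (i, s)" by (cases x)
  show ?case
  proof (intro allI)
    fix n
    show "Delta (grp (abs_F2 (w @ [x]) + zpow (gen False) n) * (X True - 1)) = D0 (abs_F2 (w @ [x]) + zpow (gen False) n)"
    proof (cases i)
      case False
      show ?thesis
      proof (cases s)
        case False
        have "abs_F2 (w @ [x]) + zpow (gen False) n = h + zpow (gen False) (n + 1)"
          using \<open>\<not> i\<close> False by (simp add: x abs_snoc abs_letter h_def zpow_succ add.assoc)
        then show ?thesis using IH by simp
      next
        case True
        have "abs_F2 (w @ [x]) + zpow (gen False) n = h + zpow (gen False) (n - 1)"
          using \<open>\<not> i\<close> True by (simp add: x abs_snoc abs_letter h_def zpow_pred add.assoc del: add_uminus_conv_diff)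
        then show ?thesis using IH by simp
      qed
    next
      case True
      show ?thesis
      proof (cases s)
        case False
        have e: "abs_F2 (w @ [x]) + zpow (gen False) n = h + gen True + zpow (gen False) n"
          using \<open>i\<close> False by (simp add: x abs_snoc abs_letter h_def)
        show ?thesis unfolding e
          by (rule clos1[OF Sh D_gen0 IH])
      next
        case True
        have e: "abs_F2 (w @ [x]) + zpow (gen False) n = (h + - gen True) + zpow (gen False) n"
          using \<open>i\<close> True by (simp add: x abs_snoc abs_letter h_def del: add_uminus_conv_diff)
        have e2: "(h + - gen True) + gen True + zpow (gen False) n = h + zpow (gen False) n"
          by (simp add: add.assoc del: add_uminus_conv_diff)
        show ?thesis unfolding e
          by (rule clos2[OF clos3[OF Sh] D_gen0]) (simp only: e2 IH)
      qed
    qed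
  qed
qed

lemma SS_all: "Delta (grp g * (X True - 1)) = D0 g"
  using spec[OF SS_word[of "rep_F2 g"], of 0] by (simp add: F2_abs_rep zpow_zero)

lemma main: "Delta (scal c + v * (X True - 1)) = Delta_Omat c v"
proof -
  have wbs: "\<And>g. scal (Poly_Mapping.lookup v g) * (grp g * (X True - 1)) \<in> WB"
    by (rule wb_scal[OF wb_grp])
  have wbv: "v * (X True - 1) \<in> WB" using wb_intro[of 0 v] by simp
  have d1: "Delta (scal c * 1 + v * (X True - 1)) = Delta (scal c * 1) + Delta (v * (X True - 1))"
    by (rule D_add[OF wb_scal[OF wb_one] wbv])
  have d2: "Delta (scal c * 1) = scal c * Delta 1" using smul wb_one by blast
  have "Delta (scal c + v * (X True - 1)) = scal c + Delta (v * (X True - 1))"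
    using d1 d2 one by simp
  also have "Delta (v * (X True - 1)) = (\<Sum>g\<in>Poly_Mapping.keys v. scal (Poly_Mapping.lookup v g) * D0 g)"
    unfolding v_expand[of v]
    by (simp add: D_sum[OF wbs] smul wb_grp SS_all)
  finally show ?thesis by (simp add: Delta_Omat_expand)
qed

end

theorem theorem3p5:
  fixes Delta :: "'k::comm_ring_1 VB \<Rightarrow> 'k VB2"
  assumes Qalg: "\<forall>n::nat. 0 < n \<longrightarrow> (\<exists>x::'k. of_nat n * x = 1)"
    and one: "Delta 1 = 1"
    and add: "\<forall>a\<in>WB. \<forall>b\<in>WB. Delta (a + b) = Delta a + Delta b"
    and smul: "\<forall>c. \<forall>a\<in>WB. Delta (scal c * a) = scal c * Delta a"
    and mult: "\<forall>a\<in>WB. \<forall>b\<in>WB. Delta (a * b) = Delta a * Delta b"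
    and gen1: "Delta (Xinv True) = tens (Xinv True) (Xinv True)"
    and gen0: "\<forall>n::int. Delta (X0pow n * (X True - 1)) =
                 tens (X0pow n * (X True - 1)) 1 + tens 1 (X0pow n * (X True - 1))
               - gsum 1 (n - 1) (\<lambda>k. tens (X0pow k * (X True - 1)) (X0pow (n - k) * (X True - 1)))"
  shows "\<forall>c v. Delta (scal c + v * (X True - 1)) = Delta_Omat c v"
  using main[OF one add smul mult gen0] by blast


end
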